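(* Suppose the disturbance-action policy is implemented with time-varying parameters $\bm M_k\in\mathcal M$ for all $k$, with disturbances satisfying $\|w_k\|_\infty\le\bar w$, and suppose $\kappa^2(1-\gamma)^H<1$. Then for all $t\ge0$, $\|x_t\|_2\le b$, where $$b=\frac{\kappa\sqrt n\,\bar w\,(\kappa^2+2\kappa^5\kappa_B\sqrt{mn}\,H)}{(1-\kappa^2(1-\gamma)^H)\gamma}+\frac{2\sqrt{mn}\,\kappa^3\bar w}{\gamma}.$$ Moreover, if $H\ge\frac{\log(2\kappa^2)}{\log((1-\gamma)^{-1})}$, then $b\le8\sqrt{mn^2}\,H\bar w\kappa^6\kappa_B/\gamma$.
   Context: System $x_{t+1}=Ax_t+Bu_t+w_t$, $A\in\mathbb R^{n\times n}$, $B\in\mathbb R^{n\times m}$, $x_0=0$; $\bar w>0$. For matrices $\|\cdot\|_\infty$ is the max absolute row sum and $\|\cdot\|_2$ the spectral norm. For $\kappa\ge1$, $\gamma\in(0,1)$, $K$ is $(\kappa,\gamma)$-strongly stable if $A-BK=Q^{-1}LQ$ with $\|L\|_2\le1-\gamma$ and $\max(\|Q\|_2,\|Q^{-1}\|_2,\|K\|_2)\le\kappa$. $\kappa_B=\max(\|B\|_2,1)$. Fix a $(\kappa,\gamma)$-strongly stable $\mathbb K$. A parameter is a list $\bm M=(M^{[1]},\dots,M^{[H]})$, $M^{[i]}\in\mathbb R^{m\times n}$; implementing $\bm M_t$ means $u_t=-\mathbb Kx_t+\sum_{i=1}^HM_t^{[i]}w_{t-i}$ with $w_s=0$ for $s<0$.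 $\mathcal M=\{\bm M:\|M^{[i]}\|_\infty\le2\sqrt n\kappa^3(1-\gamma)^{i-1},\ 1\le i\le H\}$. *)

theory Defs
  imports "HOL-Analysis.Analysis"
begin

definition spec_norm :: "real^'n^'m \<Rightarrow> real" where
  "spec_norm M = onorm (\<lambda>x. M *v x)"

definition vec_inf_norm :: "real^'n \<Rightarrow> real" where
  "vec_inf_norm x = Max (range (\<lambda>i. \<bar>x $ i\<bar>))"

definition mat_inf_norm :: "real^'n^'m \<Rightarrow> real" where
  "mat_inf_norm M = Max (range (\<lambda>i. \<Sum>j\<in>UNIV. \<bar>M $ i $ j\<bar>))"

definition strongly_stable ::
  "real^'n^'n \<Rightarrow> real^'m^'n \<Rightarrow> real^'n^'m \<Rightarrow> real \<Rightarrow> real \<Rightarrow> bool" where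
  "strongly_stable A B K \<kappa> \<gamma> \<longleftrightarrow>
     (\<exists>Q L :: real^'n^'n. invertible Q \<and>
        A - B ** K = matrix_inv Q ** L ** Q \<and>
        spec_norm L \<le> 1 - \<gamma> \<and>
        spec_norm Q \<le> \<kappa> \<and> spec_norm (matrix_inv Q) \<le> \<kappa> \<and> spec_norm K \<le> \<kappa>)"

definition in_M_set :: "nat \<Rightarrow> real \<Rightarrow> real \<Rightarrow> (nat \<Rightarrow> real^'n^'m) \<Rightarrow> bool" where
  "in_M_set H \<kappa> \<gamma> M \<longleftrightarrow>
     (\<forall>i\<in>{1..H}. mat_inf_norm (M i) \<le> 2 * sqrt (real CARD('n)) * \<kappa>^3 * (1 - \<gamma>)^(i - 1))"

end

theory Submission
  imports Defs
begin

lemma inv_facts: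
  fixes Q :: "real^'n^'n"
  assumes "invertible Q"
  shows "Q ** matrix_inv Q = mat 1 \<and> matrix_inv Q ** Q = mat 1"
  using assms unfolding invertible_def matrix_inv_def by (rule someI_ex)

lemma spec_norm_bound: "norm ((M::real^'n^'m) *v y) \<le> spec_norm M * norm y"
  unfolding spec_norm_def by (rule onorm) simp

lemma spec_norm_nonneg: "spec_norm (M::real^'n^'m) \<ge> 0"
  unfolding spec_norm_def by (rule onorm_pos_le) simp

lemma norm_le_comp:
  fixes y :: "real^'n"
  assumes "\<And>i. \<bar>y $ i\<bar> \<le> C"
  shows "norm y \<le> sqrt (real CARD('n)) * C"
proof -
  have C0: "C \<ge> 0" using assms[of undefined] by linarith
  have "(\<Sum>i\<in>UNIV. (y $ i)^2) \<le> (\<Sum>i\<in>(UNIV::'n set). C^2)"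
    apply (rule sum_mono)
    using assms by (metis abs_ge_zero abs_le_square_iff abs_of_nonneg C0)
  also have "\<dots> = real CARD('n) * C^2" by simp
  finally have "norm y ^ 2 \<le> (sqrt (real CARD('n)) * C)^2"
    by (simp add: norm_vec_def L2_set_def power_mult_distrib sum_nonneg)
  then show ?thesis using power2_le_imp_le C0 by simp
qed

lemma comp_le_vinf: "\<bar>y $ i\<bar> \<le> vec_inf_norm (y::real^'n)"
  unfolding vec_inf_norm_def by (rule Max_ge) auto

lemma comp_le_minf: "(\<Sum>j\<in>UNIV. \<bar>M $ i $ j\<bar>) \<le> mat_inf_norm (M::real^'n^'m)"
  unfolding mat_inf_norm_def by (rule Max_ge) auto

lemma mv_comp_bound:
  fixes M :: "real^'n^'m" and y :: "real^'n"
  assumes "\<And>j. \<bar>y $ j\<bar> \<le> c"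
  shows "\<bar>(M *v y) $ i\<bar> \<le> mat_inf_norm M * c"
proof -
  have "\<bar>(M *v y) $ i\<bar> = \<bar>\<Sum>j\<in>UNIV. M $ i $ j * y $ j\<bar>" by (simp add: matrix_vector_mult_def)
  also have "\<dots> \<le> (\<Sum>j\<in>UNIV. \<bar>M $ i $ j\<bar> * c)"
    by (rule order_trans[OF sum_abs sum_mono]) (simp add: abs_mult assms mult_left_mono)
  also have "\<dots> = (\<Sum>j\<in>UNIV. \<bar>M $ i $ j\<bar>) * c" by (simp add: sum_distrib_right)
  also have "\<dots> \<le> mat_inf_norm M * c"
    using assms[of undefined] comp_le_minf[of M i] by (intro mult_right_mono) auto
  finally show ?thesis .
qed

lemma mv_neg: "(A::real^'n^'m) *v (- y) = - (A *v y)"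
  by (metis diff_0 matrix_vector_mult_diff_distrib matrix_vector_mult_0_right)

lemma ge1_mult: "1 \<le> (a::real) \<Longrightarrow> 1 \<le> b \<Longrightarrow> 1 \<le> a * b"
  using mult_mono[of 1 a 1 b] by simp

lemma geo_sum: 
  fixes r :: real
  shows "(\<Sum>i\<in>{1..H}. r^(i-1)) = (\<Sum>i<H. r^i)"
  by (induction H) (auto simp: atLeastAtMostSuc_conv)

lemma geo_bound:
  fixes g :: real assumes "0 < g" "g < 1"
  shows "(\<Sum>i<H. (1-g)^i) \<le> 1/g"
proof -
  have "(\<Sum>i<H. (1-g)^i) = (1 - (1-g)^H)/g" using assms by (simp add: sum_gp_strict)
  also have "\<dots> \<le> 1/g" using assms by (intro divide_right_mono) auto
  finally show ?thesis .
qed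

theorem lemma2:
  fixes A :: "real^'n^'n" and B :: "real^'m^'n" and KK :: "real^'n^'m"
    and x :: "nat \<Rightarrow> real^'n" and u :: "nat \<Rightarrow> real^'m" and w :: "nat \<Rightarrow> real^'n"
    and M :: "nat \<Rightarrow> nat \<Rightarrow> real^'n^'m"
    and \<kappa> \<gamma> wbar :: real and H :: nat
  assumes kappa: "\<kappa> \<ge> 1"
    and gamma: "0 < \<gamma>" "\<gamma> < 1"
    and wbar: "wbar > 0"
    and stable: "strongly_stable A B KK \<kappa> \<gamma>"
    and x0: "x 0 = 0"
    and dyn: "\<And>t. x (Suc t) = A *v x t + B *v u t + w t"
    and ctrl: "\<And>t. u t = - (KK *v x t) + (\<Sum>i\<in>{1..H}. if i \<le> t then M t i *v w (t - i) else 0)"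
    and Min: "\<And>k. in_M_set H \<kappa> \<gamma> (M k)"
    and wbd: "\<And>k. vec_inf_norm (w k) \<le> wbar"
    and Hcond: "\<kappa>^2 * (1 - \<gamma>)^H < 1"
  shows "let n = real CARD('n); m = real CARD('m); \<kappa>B = max (spec_norm B) 1;
             b = \<kappa> * sqrt n * wbar * (\<kappa>^2 + 2 * \<kappa>^5 * \<kappa>B * sqrt (m * n) * real H)
                   / ((1 - \<kappa>^2 * (1 - \<gamma>)^H) * \<gamma>)
                 + 2 * sqrt (m * n) * \<kappa>^3 * wbar / \<gamma>
         in (\<forall>t. norm (x t) \<le> b) \<and>
            (real H \<ge> ln (2 * \<kappa>^2) / ln (1 / (1 - \<gamma>)) \<longrightarrow>
               b \<le> 8 * sqrt (m * n^2) * real H * wbar * \<kappa>^6 * \<kappa>B / \<gamma>)"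
proof -
  define n where "n = real CARD('n)"
  define m where "m = real CARD('m)"
  define kB where "kB = max (spec_norm B) 1"
  have n1: "n \<ge> 1" unfolding n_def by (simp add: Suc_leI)
  have m1: "m \<ge> 1" unfolding m_def by (simp add: Suc_leI)
  have kB1: "kB \<ge> 1" "spec_norm B \<le> kB" unfolding kB_def by auto
  obtain Q L :: "real^'n^'n" where Qinv: "invertible Q"
    and Phi: "A - B ** KK = matrix_inv Q ** L ** Q" and Lb: "spec_norm L \<le> 1 - \<gamma>"
    and Qb: "spec_norm Q \<le> \<kappa>" and Qib: "spec_norm (matrix_inv Q) \<le> \<kappa>"
    using stable unfolding strongly_stable_def by blast
  have QQ: "Q ** matrix_inv Q = mat 1" "matrix_inv Q ** Q = mat 1" using inv_facts[OF Qinv] by auto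
  define v where "v t = (\<Sum>i\<in>{1..H}. if i \<le> t then M t i *v w (t - i) else 0)" for t
  have wc: "\<bar>w k $ j\<bar> \<le> wbar" for k j using comp_le_vinf[of "w k" j] wbd[of k] by linarith
  have wn: "norm (w k) \<le> sqrt n * wbar" for k unfolding n_def by (rule norm_le_comp) (rule wc)
  define cv where "cv = 2 * sqrt n * \<kappa>^3 * wbar / \<gamma>"
  have vc: "\<bar>v t $ j\<bar> \<le> cv" for t j
  proof -
    have "\<bar>v t $ j\<bar> = \<bar>\<Sum>i\<in>{1..H}. (if i \<le> t then M t i *v w (t - i) else 0) $ j\<bar>"
      unfolding v_def by simp
    also have "\<dots> \<le> (\<Sum>i\<in>{1..H}. \<bar>(if i \<le> t then M t i *v w (t - i) else 0) $ j\<bar>)"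
      by (rule sum_abs)
    also have "\<dots> \<le> (\<Sum>i\<in>{1..H}. (2 * sqrt n * \<kappa>^3 * wbar) * (1 - \<gamma>)^(i - 1))"
    proof (rule sum_mono)
      fix i assume i: "i \<in> {1..H}"
      have mi: "mat_inf_norm (M t i) \<le> 2 * sqrt n * \<kappa>^3 * (1 - \<gamma>)^(i - 1)"
        using Min[of t] i unfolding in_M_set_def n_def by blast
      have "0 \<le> 2 * sqrt n * \<kappa>^3 * wbar * (1 - \<gamma>)^(i - 1)"
        using gamma wbar kappa n1 by (intro mult_nonneg_nonneg) auto
      moreover have "\<bar>(M t i *v w (t - i)) $ j\<bar> \<le> 2 * sqrt n * \<kappa>^3 * wbar * (1 - \<gamma>)^(i - 1)"
        using mv_comp_bound[of "w (t - i)" wbar "M t i" j, OF wc] mi wbar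
        by (smt (verit, best) mult.commute mult.left_commute mult_right_mono)
      ultimately show "\<bar>(if i \<le> t then M t i *v w (t - i) else 0) $ j\<bar> \<le> (2 * sqrt n * \<kappa>^3 * wbar) * (1 - \<gamma>)^(i - 1)"
        by (simp add: mult.assoc)
    qed
    also have "\<dots> = (2 * sqrt n * \<kappa>^3 * wbar) * (\<Sum>i<H. (1 - \<gamma>)^i)"
      by (subst geo_sum[symmetric]) (simp add: sum_distrib_left)
    also have "\<dots> \<le> (2 * sqrt n * \<kappa>^3 * wbar) * (1 / \<gamma>)"
      using geo_bound[OF gamma, of H] gamma wbar kappa n1 by (intro mult_left_mono) auto
    finally show ?thesis unfolding cv_def by simp
  qed
  have vn: "norm (v t) \<le> sqrt m * cv" for t unfolding m_def by (rule norm_le_comp) (rule vc)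
  define c where "c = sqrt n * wbar + kB * (sqrt m * cv)"
  have cv0: "cv \<ge> 0" unfolding cv_def using gamma wbar kappa n1 by simp
  have c0: "c \<ge> 0" unfolding c_def using cv0 kB1 wbar n1 m1 by (intro add_nonneg_nonneg mult_nonneg_nonneg) auto
  have en: "norm (B *v v t + w t) \<le> c" for t
  proof -
    have "norm (B *v v t + w t) \<le> norm (B *v v t) + norm (w t)" by (rule norm_triangle_ineq)
    also have "norm (B *v v t) \<le> spec_norm B * norm (v t)" by (rule spec_norm_bound)
    also have "\<dots> \<le> kB * (sqrt m * cv)"
      using kB1 vn[of t] spec_norm_nonneg[of B] by (intro mult_mono) auto
    finally show ?thesis using wn[of t] unfolding c_def by linarith
  qed
  have rec: "x (Suc t) = (A - B ** KK) *v x t + (B *v v t + w t)" for t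
    using dyn[of t] ctrl[of t] unfolding v_def
    by (simp add: matrix_vector_mult_diff_rdistrib matrix_vector_right_distrib
        mv_neg matrix_vector_mul_assoc[symmetric] algebra_simps)
  have QPhi: "Q ** (A - B ** KK) = L ** Q"
    unfolding Phi by (metis QQ(1) matrix_mul_assoc matrix_mul_lid)
  have zrec: "Q *v x (Suc t) = L *v (Q *v x t) + Q *v (B *v v t + w t)" for t
    unfolding rec matrix_vector_right_distrib matrix_vector_mul_assoc QPhi ..
  have zb: "norm (Q *v x t) \<le> \<kappa> * c / \<gamma>" for t
  proof (induction t)
    case 0 then show ?case using x0 c0 kappa gamma by simp
  next
    case (Suc t)
    have "norm (Q *v x (Suc t)) \<le> norm (L *v (Q *v x t)) + norm (Q *v (B *v v t + w t))"
      unfolding zrec by (rule norm_triangle_ineq)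
    also have "norm (L *v (Q *v x t)) \<le> spec_norm L * norm (Q *v x t)" by (rule spec_norm_bound)
    also have "\<dots> \<le> (1 - \<gamma>) * (\<kappa> * c / \<gamma>)"
      using Lb Suc spec_norm_nonneg[of L] by (intro mult_mono) auto
    also have "norm (Q *v (B *v v t + w t)) \<le> spec_norm Q * norm (B *v v t + w t)" by (rule spec_norm_bound)
    also have "\<dots> \<le> \<kappa> * c"
      using Qb en[of t] spec_norm_nonneg[of Q] kappa by (intro mult_mono) auto
    finally have "norm (Q *v x (Suc t)) \<le> (1 - \<gamma>) * (\<kappa> * c / \<gamma>) + \<kappa> * c" by simp
    also have "\<dots> = \<kappa> * c / \<gamma>" using gamma by (simp add: field_simps)
    finally show ?case .
  qed
  have xb: "norm (x t) \<le> \<kappa> * (\<kappa> * c / \<gamma>)" for t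
  proof -
    have "x t = matrix_inv Q *v (Q *v x t)" by (simp add: matrix_vector_mul_assoc QQ)
    then have "norm (x t) \<le> spec_norm (matrix_inv Q) * norm (Q *v x t)"
      using spec_norm_bound by metis
    also have "\<dots> \<le> \<kappa> * (\<kappa> * c / \<gamma>)"
      using Qib zb[of t] spec_norm_nonneg[of "matrix_inv Q"] kappa by (intro mult_mono) auto
    finally show ?thesis .
  qed
  have H1: "H \<ge> 1"
  proof (rule ccontr)
    assume "\<not> H \<ge> 1" then have "H = 0" by simp
    moreover have "\<kappa>^2 \<ge> 1" using kappa by (simp add: one_le_power)
    ultimately show False using Hcond by simp
  qed
  define s where "s = sqrt n"
  define r where "r = sqrt m"
  have s1: "s \<ge> 1" and r1: "r \<ge> 1" unfolding s_def r_def using n1 m1 by auto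
  have ss: "s * s = n" unfolding s_def using n1 by simp
  have smn: "sqrt (m * n) = r * s" unfolding r_def s_def by (simp add: real_sqrt_mult)
  have smn2: "sqrt (m * n^2) = r * n" unfolding r_def using n1 by (simp add: real_sqrt_mult)
  define D where "D = 1 - \<kappa>^2 * (1 - \<gamma>)^H"
  have D0: "D > 0" unfolding D_def using Hcond by simp
  have D1: "D \<le> 1" unfolding D_def using gamma by simp
  have DH: "D \<le> real H * \<gamma>"
  proof -
    have "1 + real H * (- \<gamma>) \<le> (1 + - \<gamma>)^H" using gamma by (intro Bernoulli_inequality) auto
    moreover have "(1 - \<gamma>)^H \<le> \<kappa>^2 * (1 - \<gamma>)^H"
      using kappa gamma mult_right_mono[of 1 "\<kappa>^2" "(1 - \<gamma>)^H"] by (simp add: one_le_power)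
    ultimately show ?thesis unfolding D_def by simp
  qed
  define b where "b = \<kappa> * s * wbar * (\<kappa>^2 + 2 * \<kappa>^5 * kB * (r * s) * real H) / (D * \<gamma>)
                 + 2 * (r * s) * \<kappa>^3 * wbar / \<gamma>"
  have k0: "\<kappa> > 0" using kappa by simp
  have part1: "norm (x t) \<le> b" for t
  proof -
    have eq: "\<kappa> * (\<kappa> * c / \<gamma>) = \<kappa>^2 * s * wbar / \<gamma> + (2 * \<kappa>^5 * kB * r * s * wbar) / (\<gamma> * \<gamma>)"
      unfolding c_def cv_def s_def r_def using gamma by (simp add: field_simps power2_eq_square power_numeral_reduce)
    have T1: "\<kappa>^2 * s * wbar / \<gamma> \<le> \<kappa> * s * wbar * \<kappa>^2 / (D * \<gamma>)"
    proof -
      have "\<kappa>^2 * s * wbar / \<gamma> \<le> \<kappa> * s * wbar * \<kappa>^2 / \<gamma>"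
        proof (intro divide_right_mono)
        have "1 * (s * wbar * \<kappa>^2) \<le> \<kappa> * (s * wbar * \<kappa>^2)"
          using kappa s1 wbar by (intro mult_right_mono) auto
        then show "\<kappa>^2 * s * wbar \<le> \<kappa> * s * wbar * \<kappa>^2" by (simp add: algebra_simps)
      qed (use gamma in auto)
      also have "\<dots> \<le> \<kappa> * s * wbar * \<kappa>^2 / (D * \<gamma>)"
        using kappa s1 wbar gamma D0 D1 by (intro divide_left_mono) (auto simp: mult_le_cancel_right1)
      finally show ?thesis .
    qed
    have T2: "(2 * \<kappa>^5 * kB * r * s * wbar) / (\<gamma> * \<gamma>) \<le> \<kappa> * s * wbar * (2 * \<kappa>^5 * kB * (r * s) * real H) / (D * \<gamma>)"
    proof -
      define X where "X = 2 * \<kappa>^5 * kB * r * s * wbar"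
      have X0: "X > 0" unfolding X_def using k0 kB1 r1 s1 wbar by simp
      have Y0: "\<kappa> * s * real H > 0" using k0 s1 H1 by simp
      have "X / (\<gamma> * \<gamma>) = ((\<kappa> * s * real H) * X) / ((\<kappa> * s * real H) * (\<gamma> * \<gamma>))"
        using Y0 by (intro mult_divide_mult_cancel_left[symmetric]) (rule less_imp_neq[symmetric])
      also have "\<dots> \<le> ((\<kappa> * s * real H) * X) / (D * \<gamma>)"
      proof (rule frac_le)
        show "0 \<le> (\<kappa> * s * real H) * X" using X0 Y0 by simp
        show "0 < D * \<gamma>" using D0 gamma by simp
        have "D \<le> \<kappa> * s * real H * \<gamma>"
        proof -
          have "real H * \<gamma> \<le> (\<kappa> * s) * (real H * \<gamma>)"
            using kappa s1 H1 gamma mult_right_mono[of 1 "\<kappa> * s" "real H * \<gamma>"] ge1_mult[of \<kappa> s] by simp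
          then show ?thesis using DH by (simp add: mult.assoc)
        qed
        then have "D * \<gamma> \<le> \<kappa> * s * real H * \<gamma> * \<gamma>" using gamma by (intro mult_right_mono) auto
        then show "D * \<gamma> \<le> (\<kappa> * s * real H) * (\<gamma> * \<gamma>)" by (simp add: mult.assoc)
      qed auto
      also have "\<dots> = \<kappa> * s * wbar * (2 * \<kappa>^5 * kB * (r * s) * real H) / (D * \<gamma>)"
        unfolding X_def by (simp add: algebra_simps)
      finally show ?thesis unfolding X_def .
    qed
    have "\<kappa> * s * wbar * (\<kappa>^2 + 2 * \<kappa>^5 * kB * (r * s) * real H) / (D * \<gamma>)
        = \<kappa> * s * wbar * \<kappa>^2 / (D * \<gamma>) + \<kappa> * s * wbar * (2 * \<kappa>^5 * kB * (r * s) * real H) / (D * \<gamma>)"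
      by (simp add: distrib_left add_divide_distrib)
    moreover have "0 \<le> 2 * (r * s) * \<kappa>^3 * wbar / \<gamma>" using r1 s1 k0 wbar gamma by simp
    ultimately show ?thesis using xb[of t] eq T1 T2 unfolding b_def by linarith
  qed
  have part2: "b \<le> 8 * sqrt (m * n^2) * real H * wbar * \<kappa>^6 * kB / \<gamma>"
    if Hl: "real H \<ge> ln (2 * \<kappa>^2) / ln (1 / (1 - \<gamma>))"
  proof -
    have l0: "ln (1 / (1 - \<gamma>)) > 0" using gamma by simp
    have "ln (2 * \<kappa>^2) \<le> real H * ln (1 / (1 - \<gamma>))" using Hl l0 by (simp add: pos_divide_le_eq)
    also have "\<dots> = ln ((1 / (1 - \<gamma>))^H)" using gamma by (simp add: ln_realpow)
    finally have "2 * \<kappa>^2 \<le> (1 / (1 - \<gamma>))^H" using k0 gamma by (subst (asm) ln_le_cancel_iff) auto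
    then have "2 * \<kappa>^2 * (1 - \<gamma>)^H \<le> 1" using gamma by (simp add: power_one_over field_simps)
    then have Dh: "1 / D \<le> 2" unfolding D_def using D0 D_def by (simp add: field_simps)
    define F where "F = \<kappa> * s * wbar * (\<kappa>^2 + 2 * \<kappa>^5 * kB * (r * s) * real H)"
    have F0: "F \<ge> 0" unfolding F_def using k0 s1 wbar kB1 r1 by simp
    have "b = (F * (1 / D) + 2 * (r * s) * \<kappa>^3 * wbar) / \<gamma>"
      unfolding b_def F_def using D0 gamma by (simp add: field_simps)
    also have "\<dots> \<le> (F * 2 + 2 * (r * s) * \<kappa>^3 * wbar) / \<gamma>"
      using Dh F0 gamma by (intro divide_right_mono add_right_mono mult_left_mono) auto
    also have "\<dots> \<le> (8 * (r * n) * real H * wbar * \<kappa>^6 * kB) / \<gamma>"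
    proof (intro divide_right_mono)
      show "0 \<le> \<gamma>" using gamma by simp
      have k36: "\<kappa>^3 \<le> \<kappa>^6" using kappa by (intro power_increasing) auto
      have p1: "1 \<le> kB * r * s * real H" using kB1 r1 s1 H1 by (intro ge1_mult) auto
      have p2: "1 \<le> kB * s * real H" using kB1 r1 s1 H1 by (intro ge1_mult) auto
      have a1: "\<kappa>^3 \<le> \<kappa>^6 * (kB * r * s * real H)"
        using k36 p1 mult_mono[of "\<kappa>^3" "\<kappa>^6" 1 "kB * r * s * real H"] k0 by simp
      have a2: "\<kappa>^3 \<le> \<kappa>^6 * (kB * s * real H)"
        using k36 p2 mult_mono[of "\<kappa>^3" "\<kappa>^6" 1 "kB * s * real H"] k0 by simp
      have "F * 2 + 2 * (r * s) * \<kappa>^3 * wbar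
          = 2 * s * wbar * \<kappa>^3 + 4 * \<kappa>^6 * kB * r * (s * s) * real H * wbar + 2 * (r * s) * wbar * \<kappa>^3"
        unfolding F_def by (simp add: algebra_simps power_numeral_reduce)
      also have "\<dots> \<le> 2 * s * wbar * (\<kappa>^6 * (kB * r * s * real H)) + 4 * \<kappa>^6 * kB * r * (s * s) * real H * wbar
           + 2 * (r * s) * wbar * (\<kappa>^6 * (kB * s * real H))"
        using a1 a2 s1 r1 wbar by (intro add_mono mult_left_mono order_refl) auto
      also have "\<dots> = 8 * (r * (s * s)) * real H * wbar * \<kappa>^6 * kB" by (simp add: algebra_simps)
      finally show "F * 2 + 2 * (r * s) * \<kappa>^3 * wbar \<le> 8 * (r * n) * real H * wbar * \<kappa>^6 * kB"
        using ss by simp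
    qed
    finally show ?thesis using smn2 by simp
  qed
  show ?thesis
    unfolding Let_def n_def[symmetric] m_def[symmetric] kB_def[symmetric] smn
      s_def[symmetric] D_def[symmetric] b_def[symmetric]
    using part1 part2 by blast
qed

end
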